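(* Let $Q=((A,V);B;\alpha)$ be as in the context and $\varphi$ any scale function. (1) Every $x\in A\hat\otimes_\alpha B$ can be written as $x=x_1+x_2$ with $x_1,x_2\in\mathfrak B_\varphi(Q)$. (2) Suppose moreover that $A$ and $B$ are unital Banach algebras and $A\hat\otimes_\alpha B$ is a Banach algebra with multiplication determined by $(a_1\otimes b_1)(a_2\otimes b_2)=(a_1a_2)\otimes(b_1b_2)$. Then every invertible $x\in(A\hat\otimes_\alpha B)^{-1}$ can be written as $x=x_1x_2$ where $x_1,x_2$ are invertible and $x_1,x_1^{-1},x_2,x_2^{-1}\in\mathfrak B_\varphi(Q)$.
   Context: $\mathbb F\in\{\mathbb R,\mathbb C\}$. $A$ is an infinite-dimensional separable Banach space over $\mathbb F$ and $V_0\subsetneq V_1\subsetneq\cdots\subset A$ are finite-dimensional subspaces whose union $V$ is dense in $A$. $B$ is a Banach space over $\mathbb F$, $\alpha$ a reasonable crossnorm on $A\otimes B$, $A\hat\otimes_\alpha B$ the completion. $E_n(x):=\inf_{h\in V_n\otimes B}\|x-h\|_{A\hat\otimes_\alpha B}$. A scale function is a nonincreasing $\varphi:\mathbb N\to(0,\infty)$ with $\varphi(n)\to0$. $\mathfrak B_\varphi(Q)=\{x:\liminf_{n\to\infty}(E_n(x))^{\varphi(n)}<1\}$. *)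

theory Defs
  imports "HOL-Analysis.Analysis"
begin

definition scalars_R_or_C :: "'k::real_normed_field itself \<Rightarrow> bool" where
  "scalars_R_or_C _ \<longleftrightarrow>
     (\<forall>c::'k. \<exists>a. c = of_real a) \<or>
     (\<exists>i::'k. i * i = -1 \<and> (\<forall>c::'k. \<exists>a b. c = of_real a + of_real b * i))"

text \<open>A normed space over the scalar field 'k, given by the scalar multiplication sc
  (compatible with the real structure of the type).\<close>
definition F_space :: "('k::real_normed_field \<Rightarrow> 'a::real_normed_vector \<Rightarrow> 'a) \<Rightarrow> bool" where
  "F_space sc \<longleftrightarrow>
     (\<forall>r x. sc (of_real r) x = r *\<^sub>R x) \<and>
     (\<forall>c d x. sc c (sc d x) = sc (c * d) x) \<and>
     (\<forall>c x y. sc c (x + y) = sc c x + sc c y) \<and>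
     (\<forall>c d x. sc (c + d) x = sc c x + sc d x) \<and>
     (\<forall>c x. norm (sc c x) = norm c * norm x)"

definition F_linear :: "('k \<Rightarrow> 'a \<Rightarrow> 'a) \<Rightarrow> ('k \<Rightarrow> 'b \<Rightarrow> 'b) \<Rightarrow> ('a::plus \<Rightarrow> 'b::plus) \<Rightarrow> bool" where
  "F_linear sc1 sc2 f \<longleftrightarrow> (\<forall>x y. f (x + y) = f x + f y) \<and> (\<forall>c x. f (sc1 c x) = sc2 c (f x))"

definition F_functional :: "('k::real_normed_field \<Rightarrow> 'a::real_normed_vector \<Rightarrow> 'a) \<Rightarrow> ('a \<Rightarrow> 'k) \<Rightarrow> real \<Rightarrow> bool" where
  "F_functional sc f K \<longleftrightarrow> F_linear sc (\<lambda>c y. c * y) f \<and> (\<forall>x. norm (f x) \<le> K * norm x)"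

definition F_span :: "('k \<Rightarrow> 'a \<Rightarrow> 'a) \<Rightarrow> 'a::comm_monoid_add set \<Rightarrow> 'a set" where
  "F_span sc S = {(\<Sum>s\<in>T. sc (c s) s) | T c. finite T \<and> T \<subseteq> S}"

definition F_subspace :: "('k \<Rightarrow> 'a \<Rightarrow> 'a) \<Rightarrow> 'a::comm_monoid_add set \<Rightarrow> bool" where
  "F_subspace sc U \<longleftrightarrow> 0 \<in> U \<and> (\<forall>x\<in>U. \<forall>y\<in>U. x + y \<in> U) \<and> (\<forall>c. \<forall>x\<in>U. sc c x \<in> U)"

definition F_finite_dim :: "('k \<Rightarrow> 'a \<Rightarrow> 'a) \<Rightarrow> 'a::comm_monoid_add set \<Rightarrow> bool" where
  "F_finite_dim sc U \<longleftrightarrow> (\<exists>S. finite S \<and> S \<subseteq> U \<and> F_span sc S = U)"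

definition approx_scheme :: "('k::real_normed_field \<Rightarrow> 'a::banach \<Rightarrow> 'a) \<Rightarrow> (nat \<Rightarrow> 'a set) \<Rightarrow> bool" where
  "approx_scheme sc V \<longleftrightarrow>
     F_space sc \<and>
     \<not> F_finite_dim sc (UNIV :: 'a set) \<and>
     (\<exists>D :: 'a set. countable D \<and> closure D = UNIV) \<and>
     (\<forall>n. F_subspace sc (V n) \<and> F_finite_dim sc (V n)) \<and>
     (\<forall>n. V n \<subset> V (Suc n)) \<and>
     closure (\<Union>n. V n) = UNIV"

text \<open>The Banach space 'c with the 'k-bilinear map t (a \<otimes> b) is (isometric to) the
  completion of the algebraic tensor product A \<otimes> B under a reasonable crossnorm:
  alpha(a \<otimes> b) \<le> \<parallel>a\<parallel>\<parallel>b\<parallel>, and f \<otimes> g is bounded with norm \<le> \<parallel>f\<parallel>\<parallel>g\<parallel> for all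
  bounded functionals f, g; the image of A \<otimes> B is dense.\<close>
definition reasonable_crossnorm_completion ::
  "('k::real_normed_field \<Rightarrow> 'a::banach \<Rightarrow> 'a) \<Rightarrow> ('k \<Rightarrow> 'b::banach \<Rightarrow> 'b) \<Rightarrow>
   ('k \<Rightarrow> 'c::banach \<Rightarrow> 'c) \<Rightarrow> ('a \<Rightarrow> 'b \<Rightarrow> 'c) \<Rightarrow> bool" where
  "reasonable_crossnorm_completion scA scB scX t \<longleftrightarrow>
     F_space scA \<and> F_space scB \<and> F_space scX \<and>
     (\<forall>b. F_linear scA scX (\<lambda>a. t a b)) \<and> (\<forall>a. F_linear scB scX (t a)) \<and>
     (\<forall>a b. norm (t a b) \<le> norm a * norm b) \<and>
     (\<forall>f g K L. F_functional scA f K \<and> F_functional scB g L \<longrightarrow>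
        (\<forall>(n::nat) a b. norm (\<Sum>i<n. f (a i) * g (b i)) \<le> K * L * norm (\<Sum>i<n. t (a i) (b i)))) \<and>
     closure {(\<Sum>i<n. t (a i) (b i)) | (n::nat) a b. True} = UNIV"

definition tensor_sub :: "('a \<Rightarrow> 'b \<Rightarrow> 'c::comm_monoid_add) \<Rightarrow> (nat \<Rightarrow> 'a set) \<Rightarrow> nat \<Rightarrow> 'c set" where
  "tensor_sub t V n = {(\<Sum>i<m. t (v i) (b i)) | (m::nat) v b. \<forall>i<m. v i \<in> V n}"

definition E_approx :: "('a \<Rightarrow> 'b \<Rightarrow> 'c::{comm_monoid_add,metric_space}) \<Rightarrow> (nat \<Rightarrow> 'a set) \<Rightarrow> nat \<Rightarrow> 'c \<Rightarrow> real" where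
  "E_approx t V n x = infdist x (tensor_sub t V n)"

definition scale_function :: "(nat \<Rightarrow> real) \<Rightarrow> bool" where
  "scale_function \<phi> \<longleftrightarrow> (\<forall>m n. m \<le> n \<longrightarrow> \<phi> n \<le> \<phi> m) \<and> (\<forall>n. 0 < \<phi> n) \<and> \<phi> \<longlonglongrightarrow> 0"

definition BB :: "('a \<Rightarrow> 'b \<Rightarrow> 'c::{comm_monoid_add,metric_space}) \<Rightarrow> (nat \<Rightarrow> 'a set) \<Rightarrow> (nat \<Rightarrow> real) \<Rightarrow> 'c set" where
  "BB t V \<phi> = {x. liminf (\<lambda>n. ereal (E_approx t V n x powr \<phi> n)) < 1}"

definition F_banach_algebra :: "('k::real_normed_field \<Rightarrow> 'a::banach \<Rightarrow> 'a) \<Rightarrow> ('a \<Rightarrow> 'a \<Rightarrow> 'a) \<Rightarrow> bool" where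
  "F_banach_algebra sc mul \<longleftrightarrow>
     F_space sc \<and>
     (\<forall>x y z. mul (mul x y) z = mul x (mul y z)) \<and>
     (\<forall>y. F_linear sc sc (\<lambda>x. mul x y)) \<and> (\<forall>x. F_linear sc sc (mul x)) \<and>
     (\<forall>x y. norm (mul x y) \<le> norm x * norm y)"

definition F_unital_banach_algebra :: "('k::real_normed_field \<Rightarrow> 'a::banach \<Rightarrow> 'a) \<Rightarrow> ('a \<Rightarrow> 'a \<Rightarrow> 'a) \<Rightarrow> 'a \<Rightarrow> bool" where
  "F_unital_banach_algebra sc mul one \<longleftrightarrow>
     F_banach_algebra sc mul \<and> (\<forall>x. mul one x = x \<and> mul x one = x) \<and> norm one = 1"

end

theory Submission
  imports Defs
begin


lemma BB_crit:
  assumes pos: "\<forall>n. 0 < \<phi> n"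
    and fr: "\<forall>N. \<exists>n\<ge>N. \<exists>h\<in>tensor_sub t V n. dist x h \<le> (1/2) powr (1/\<phi> n)"
  shows "x \<in> BB t V \<phi>"
proof -
  have "\<exists>n\<ge>N. ereal (E_approx t V n x powr \<phi> n) \<le> ereal (1/2)" for N
  proof -
    obtain n h where n: "n \<ge> N" "h \<in> tensor_sub t V n" "dist x h \<le> (1/2) powr (1/\<phi> n)"
      using fr by blast
    have "E_approx t V n x \<le> (1/2) powr (1/\<phi> n)"
      unfolding E_approx_def using infdist_le[OF n(2), of x] n(3) by linarith
    hence "E_approx t V n x powr \<phi> n \<le> ((1/2) powr (1/\<phi> n)) powr \<phi> n"
      by (intro powr_mono2) (use pos in \<open>auto simp: E_approx_def infdist_nonneg less_imp_le\<close>)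
    also have "\<dots> = 1/2" using pos[rule_format, of n] by (simp add: powr_powr)
    finally show ?thesis using n(1) by (intro exI[of _ n]) auto
  qed
  hence F: "frequently (\<lambda>n. ereal (E_approx t V n x powr \<phi> n) \<le> ereal (1/2)) sequentially"
    by (simp add: frequently_sequentially)
  show ?thesis
  proof (rule ccontr)
    assume "x \<notin> BB t V \<phi>"
    hence "1 \<le> liminf (\<lambda>n. ereal (E_approx t V n x powr \<phi> n))"
      by (simp add: BB_def not_less)
    hence "eventually (\<lambda>n. ereal (3/4) < ereal (E_approx t V n x powr \<phi> n)) sequentially"
    proof -
      have "ereal (3/4) < 1" by (simp add: one_ereal_def)
      thus ?thesis using \<open>1 \<le> liminf _\<close> unfolding le_Liminf_iff by blast
    qed
    then obtain N where N: "\<And>n. n \<ge> N \<Longrightarrow> ereal (3/4) < ereal (E_approx t V n x powr \<phi> n)"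
      unfolding eventually_sequentially by blast
    from F obtain n where "n \<ge> N" "ereal (E_approx t V n x powr \<phi> n) \<le> ereal (1/2)"
      unfolding frequently_sequentially by blast
    with N[OF this(1)] show False by simp
  qed
qed


lemma V_mono:
  assumes "approx_scheme scA V" "m \<le> n"
  shows "V m \<subseteq> V n"
proof -
  have "\<And>k. V k \<le> V (Suc k)" using assms(1) unfolding approx_scheme_def by blast
  thus ?thesis using lift_Suc_mono_le[of V, OF _ assms(2)] by blast
qed

lemma t_diff1:
  assumes "reasonable_crossnorm_completion scA scB scX t"
  shows "t a b - t v b = t (a - v) b"
proof -
  have "t ((a - v) + v) b = t (a - v) b + t v b"
    using assms unfolding reasonable_crossnorm_completion_def F_linear_def by blast
  thus ?thesis by simp
qed

lemma density:
  assumes AS: "approx_scheme scA V" and RC: "reasonable_crossnorm_completion scA scB scX t"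
    and e: "\<epsilon> > 0"
  shows "\<exists>n\<ge>N. \<exists>h\<in>tensor_sub t V n. dist y h < \<epsilon>"
proof -
  have "y \<in> closure {(\<Sum>i<n. t (a i) (b i)) | (n::nat) a b. True}"
    using RC unfolding reasonable_crossnorm_completion_def by simp
  then obtain z where z: "z \<in> {(\<Sum>i<n. t (a i) (b i)) | (n::nat) a b. True}" "dist z y < \<epsilon>/2"
    using e unfolding closure_approachable by (meson half_gt_zero)
  have "\<exists>(m::nat) a b. z = (\<Sum>i<m. t (a i) (b i))" using z(1) by auto
  then obtain m :: nat and a b where zd: "z = (\<Sum>i<m. t (a i) (b i))" by blast
  define S where "S = (\<Sum>i<m. norm (b i))"
  have S0: "S \<ge> 0" unfolding S_def by (simp add: sum_nonneg)
  define \<delta> where "\<delta> = \<epsilon> / (2 * (1 + S))"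
  have d0: "\<delta> > 0" using e S0 by (simp add: \<delta>_def)
  have "\<forall>i. \<exists>k v. v \<in> V k \<and> dist v (a i) < \<delta>"
  proof
    fix i
    have "a i \<in> closure (\<Union>n. V n)" using AS unfolding approx_scheme_def by simp
    then obtain v where "v \<in> (\<Union>n. V n)" "dist v (a i) < \<delta>"
      using d0 unfolding closure_approachable by blast
    thus "\<exists>k v. v \<in> V k \<and> dist v (a i) < \<delta>" by blast
  qed
  then obtain kf vf where kv: "\<And>i. vf i \<in> V (kf i)" "\<And>i. dist (vf i) (a i) < \<delta>" by metis
  define n where "n = N + (\<Sum>i<m. kf i)"
  have "\<forall>i<m. vf i \<in> V n"
  proof (intro allI impI)
    fix i assume "i < m"
    hence "kf i \<le> (\<Sum>i<m. kf i)" by (intro member_le_sum) auto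
    hence "kf i \<le> n" unfolding n_def by simp
    thus "vf i \<in> V n" using V_mono[OF AS] kv(1) by blast
  qed
  hence hin: "(\<Sum>i<m. t (vf i) (b i)) \<in> tensor_sub t V n" unfolding tensor_sub_def by blast
  have "dist z (\<Sum>i<m. t (vf i) (b i)) = norm (\<Sum>i<m. t (a i - vf i) (b i))"
    unfolding zd dist_norm sum_subtractf[symmetric] t_diff1[OF RC] ..
  also have "\<dots> \<le> (\<Sum>i<m. norm (t (a i - vf i) (b i)))" by (rule norm_sum)
  also have "\<dots> \<le> (\<Sum>i<m. \<delta> * norm (b i))"
  proof (rule sum_mono)
    fix i
    have "norm (t (a i - vf i) (b i)) \<le> norm (a i - vf i) * norm (b i)"
      using RC unfolding reasonable_crossnorm_completion_def by blast
    also have "\<dots> \<le> \<delta> * norm (b i)"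
      using kv(2)[of i] by (intro mult_right_mono) (auto simp: dist_norm norm_minus_commute)
    finally show "norm (t (a i - vf i) (b i)) \<le> \<delta> * norm (b i)" .
  qed
  also have "\<dots> = \<delta> * S" unfolding S_def by (simp add: sum_distrib_left)
  also have "\<dots> < \<epsilon> / 2" using e S0 unfolding \<delta>_def by (simp add: field_simps)
  finally have "dist z (\<Sum>i<m. t (vf i) (b i)) < \<epsilon>/2" .
  hence "dist y (\<Sum>i<m. t (vf i) (b i)) < \<epsilon>"
    using z(2) dist_triangle[of y "\<Sum>i<m. t (vf i) (b i)" z] by (simp add: dist_commute)
  thus ?thesis using hin unfolding n_def by (intro exI[of _ "N + (\<Sum>i<m. kf i)"]) auto
qed


lemma construction:
  fixes f :: "nat \<Rightarrow> 'c::complete_space \<Rightarrow> 'c" and T :: "nat \<Rightarrow> 'c set" and g :: "nat \<Rightarrow> real"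
  assumes r: "r > 0" and zst: "zst \<in> S" and g: "\<forall>n. g n > 0"
    and stage: "\<And>i z \<epsilon> N. i < r \<Longrightarrow> z \<in> S \<Longrightarrow> \<epsilon> > 0 \<Longrightarrow>
                  \<exists>n\<ge>N. \<exists>z'\<in>S. dist z' z \<le> \<epsilon> \<and> f i z' \<in> T n"
    and cont: "\<And>i z \<epsilon>. i < r \<Longrightarrow> z \<in> S \<Longrightarrow> \<epsilon> > 0 \<Longrightarrow>
                  \<exists>\<delta>>0. \<forall>w. dist w z \<le> \<delta> \<longrightarrow> w \<in> S \<and> dist (f i w) (f i z) \<le> \<epsilon>"
  shows "\<exists>z\<in>S. \<forall>i<r. \<forall>N. \<exists>n\<ge>N. \<exists>h\<in>T n. dist (f i z) h \<le> g n"
proof -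
  define Q where "Q K z b z' b' n \<longleftrightarrow> z' \<in> S \<and> 0 < b' \<and> b' \<le> b/2 \<and> K \<le> n \<and> dist z' z \<le> b \<and>
     f (K mod r) z' \<in> T n \<and>
     (\<forall>w. dist w z' \<le> 2*b' \<longrightarrow> w \<in> S \<and> dist (f (K mod r) w) (f (K mod r) z') \<le> g n)"
    for K z b z' b' n
  have step: "\<exists>z' b' n. Q K z b z' b' n" if zbS: "z \<in> S" "b > 0" for K z b
  proof -
    have i: "K mod r < r" using r by simp
    obtain n z' where n: "n \<ge> K" "z' \<in> S" "dist z' z \<le> b" "f (K mod r) z' \<in> T n"
      using stage[OF i zbS] by blast
    obtain \<delta> where d: "\<delta> > 0" "\<forall>w. dist w z' \<le> \<delta> \<longrightarrow> w \<in> S \<and> dist (f (K mod r) w) (f (K mod r) z') \<le> g n"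
      using cont[OF i n(2) g[rule_format, of n]] by blast
    have "Q K z b z' (min (b/2) (\<delta>/2)) n"
      unfolding Q_def using n d zbS by auto
    thus ?thesis by blast
  qed
  have "\<forall>K zb. \<exists>s'. fst zb \<in> S \<and> snd zb > 0 \<longrightarrow>
          Q K (fst zb) (snd zb) (fst s') (fst (snd s')) (snd (snd s'))"
    using step by fastforce
  then obtain F where F: "\<And>K zb. fst zb \<in> S \<Longrightarrow> snd zb > 0 \<Longrightarrow>
          Q K (fst zb) (snd zb) (fst (F K zb)) (fst (snd (F K zb))) (snd (snd (F K zb)))"
    by metis
  define st where "st = rec_nat (zst, 1::real) (\<lambda>K s. (fst (F K s), fst (snd (F K s))))"
  have st0: "st 0 = (zst, 1)" and stS: "st (Suc K) = (fst (F K (st K)), fst (snd (F K (st K))))" for K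
    unfolding st_def by simp_all
  define z where "z K = fst (st K)" for K
  define b where "b K = snd (st K)" for K
  define nn where "nn K = snd (snd (F K (st K)))" for K
  have inv: "z K \<in> S \<and> b K > 0" for K
  proof (induction K)
    case 0 thus ?case using zst by (simp add: z_def b_def st0)
  next
    case (Suc K)
    have "Q K (z K) (b K) (z (Suc K)) (b (Suc K)) (nn K)"
      using F[of "st K" K] Suc unfolding z_def b_def nn_def stS by simp
    thus ?case unfolding Q_def by simp
  qed
  have QK: "Q K (z K) (b K) (z (Suc K)) (b (Suc K)) (nn K)" for K
    using F[of "st K" K] inv[of K] unfolding z_def b_def nn_def stS by simp
  have bS: "b (Suc K) \<le> b K / 2" and dS: "dist (z (Suc K)) (z K) \<le> b K" for K
    using QK[of K] unfolding Q_def by auto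
  have b0: "b 0 = 1" by (simp add: b_def st0)
  have bpow: "b K \<le> (1/2)^K" for K
  proof (induction K)
    case 0 thus ?case using b0 by simp
  next
    case (Suc K) thus ?case using bS[of K] by simp
  qed
  have dm: "dist (z (K+m)) (z K) \<le> 2 * b K - 2 * b (K+m)" for K m
  proof (induction m)
    case 0 thus ?case by simp
  next
    case (Suc m)
    have "dist (z (K + Suc m)) (z K) \<le> dist (z (Suc (K+m))) (z (K+m)) + dist (z (K+m)) (z K)"
      using dist_triangle by simp
    also have "\<dots> \<le> b (K+m) + (2 * b K - 2 * b (K+m))" using dS[of "K+m"] Suc by linarith
    finally show ?case using bS[of "K+m"] by simp
  qed
  have dle: "dist (z j) (z K) \<le> 2 * b K" if "K \<le> j" for j K
    using dm[of K "j-K"] inv[of j] that by simp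
  have "Cauchy z"
    unfolding Cauchy_def
  proof (intro allI impI)
    fix e :: real assume e: "e > 0"
    obtain M where M: "(1/2::real)^M < e/4" using real_arch_pow_inv[of "e/4" "1/2"] e by auto
    show "\<exists>M. \<forall>m\<ge>M. \<forall>n\<ge>M. dist (z m) (z n) < e"
    proof (intro exI allI impI)
      fix m n assume "m \<ge> M" "n \<ge> M"
      hence "dist (z m) (z n) \<le> dist (z m) (z M) + dist (z n) (z M)"
        using dist_triangle2 by blast
      also have "\<dots> \<le> 4 * b M" using dle[OF \<open>m \<ge> M\<close>] dle[OF \<open>n \<ge> M\<close>] by linarith
      also have "\<dots> < e" using bpow[of M] M by linarith
      finally show "dist (z m) (z n) < e" .
    qed
  qed
  then obtain L where L: "z \<longlonglongrightarrow> L" using Cauchy_convergent_iff convergent_def by blast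
  have dL: "dist L (z K) \<le> 2 * b K" for K
  proof -
    have "(\<lambda>j. dist (z j) (z K)) \<longlonglongrightarrow> dist L (z K)"
      using L by (intro tendsto_intros)
    thus ?thesis by (rule LIMSEQ_le_const2) (use dle in auto)
  qed
  have LS: "L \<in> S" using QK[of 0] dL[of 1] unfolding Q_def by auto
  have "\<forall>i<r. \<forall>N. \<exists>n\<ge>N. \<exists>h\<in>T n. dist (f i L) h \<le> g n"
  proof (intro allI impI)
    fix i N assume i: "i < r"
    define K where "K = N * r + i"
    have Km: "K mod r = i" using i unfolding K_def by simp
    have "N \<le> N * r" using r by simp
    hence KN: "K \<ge> N" unfolding K_def by linarith
    from QK[of K] Km dL[of "Suc K"]
    have "nn K \<ge> K" "f i (z (Suc K)) \<in> T (nn K)" "dist (f i L) (f i (z (Suc K))) \<le> g (nn K)"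
      unfolding Q_def by auto
    thus "\<exists>n\<ge>N. \<exists>h\<in>T n. dist (f i L) h \<le> g n" using KN by (intro exI[of _ "nn K"]) auto
  qed
  thus ?thesis using LS by blast
qed


lemma part1':
  fixes t :: "'a::banach \<Rightarrow> 'b::banach \<Rightarrow> 'c::banach"
  assumes AS: "approx_scheme scA V" and RC: "reasonable_crossnorm_completion scA scB scX t"
    and SF: "scale_function \<phi>"
  shows "\<exists>x1 x2. x = x1 + x2 \<and> x1 \<in> BB t V \<phi> \<and> x2 \<in> BB t V \<phi>"
proof -
  have pos: "\<forall>n. 0 < \<phi> n" using SF unfolding scale_function_def by blast
  define f where "f = (\<lambda>i z. if i = (0::nat) then z else x - z)"
  have "\<exists>z\<in>UNIV. \<forall>i<2. \<forall>N. \<exists>n\<ge>N. \<exists>h\<in>tensor_sub t V n. dist (f i z) h \<le> (1/2) powr (1/\<phi> n)"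
  proof (rule construction)
    show "\<forall>n. (1/2::real) powr (1/\<phi> n) > 0" by simp
  next
    fix i z \<epsilon> N assume i: "i < (2::nat)" and e: "\<epsilon> > (0::real)"
    show "\<exists>n\<ge>N. \<exists>z'\<in>UNIV. dist z' z \<le> \<epsilon> \<and> f i z' \<in> tensor_sub t V n"
    proof (cases "i = 0")
      case True
      obtain n h where "n \<ge> N" "h \<in> tensor_sub t V n" "dist z h < \<epsilon>"
        using density[OF AS RC e] by blast
      thus ?thesis using True by (intro exI[of _ n]) (auto simp: f_def dist_commute intro!: exI[of _ h])
    next
      case False
      obtain n h where "n \<ge> N" "h \<in> tensor_sub t V n" "dist (x - z) h < \<epsilon>"
        using density[OF AS RC e] by blast
      moreover have "dist (x - h) z = dist (x - z) h" by (simp add: dist_norm algebra_simps)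
      ultimately show ?thesis using False by (intro exI[of _ n]) (auto simp: f_def intro!: exI[of _ "x - h"])
    qed
  next
    fix i z \<epsilon> assume "\<epsilon> > (0::real)"
    moreover have "dist (x - w) (x - z) = dist w z" for w by (simp add: dist_norm algebra_simps norm_minus_commute)
    ultimately show "\<exists>\<delta>>0. \<forall>w. dist w z \<le> \<delta> \<longrightarrow> w \<in> UNIV \<and> dist (f i w) (f i z) \<le> \<epsilon>"
      by (intro exI[of _ \<epsilon>]) (auto simp: f_def)
  qed auto
  then obtain z where z: "\<forall>i<2. \<forall>N. \<exists>n\<ge>N. \<exists>h\<in>tensor_sub t V n. dist (f i z) h \<le> (1/2) powr (1/\<phi> n)"
    by blast
  have "z \<in> BB t V \<phi>" using z[rule_format, of 0] by (intro BB_crit[OF pos]) (auto simp: f_def)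
  moreover have "x - z \<in> BB t V \<phi>" using z[rule_format, of 1] by (intro BB_crit[OF pos]) (auto simp: f_def)
  ultimately show ?thesis by (intro exI[of _ z] exI[of _ "x - z"]) auto
qed



locale balg =
  fixes mul :: "'c::banach \<Rightarrow> 'c \<Rightarrow> 'c" and e :: 'c
  assumes assoc: "mul (mul x y) z = mul x (mul y z)"
    and bl_l: "bounded_linear (\<lambda>x. mul x y)" and bl_r: "bounded_linear (mul x)"
    and normm: "norm (mul x y) \<le> norm x * norm y"
    and unit_l: "mul e x = x" and unit_r: "mul x e = x" and norm_e: "norm e \<le> 1"
begin

lemma add_l: "mul (a + b) c = mul a c + mul b c"
  using linear_add[OF bounded_linear.linear[OF bl_l[of c]]] by simp
lemma add_r: "mul c (a + b) = mul c a + mul c b"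
  using linear_add[OF bounded_linear.linear[OF bl_r[of c]]] by simp
lemma diff_l: "mul (a - b) c = mul a c - mul b c"
  using linear_diff[OF bounded_linear.linear[OF bl_l[of c]]] by simp
lemma diff_r: "mul c (a - b) = mul c a - mul c b"
  using linear_diff[OF bounded_linear.linear[OF bl_r[of c]]] by simp
lemma minus_l: "mul (- a) c = - mul a c"
  using linear_neg[OF bounded_linear.linear[OF bl_l[of c]]] by simp
lemma minus_r: "mul c (- a) = - mul c a"
  using linear_neg[OF bounded_linear.linear[OF bl_r[of c]]] by simp

lemma inv_unique: "mul z w = e \<Longrightarrow> mul w z = e \<Longrightarrow> mul z w2 = e \<Longrightarrow> mul w2 z = e \<Longrightarrow> w = w2"
  by (metis assoc unit_l unit_r)

lemma neumann:
  assumes v: "norm v \<le> 1/2"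
  shows "\<exists>s. mul (e + v) s = e \<and> mul s (e + v) = e \<and> norm (s - e) \<le> 2 * norm v"
proof -
  define p where "p k = ((mul (-v)) ^^ k) e" for k
  have p0: "p 0 = e" and pS: "p (Suc k) = mul (-v) (p k)" for k by (simp_all add: p_def)
  have pn: "norm (p k) \<le> norm v ^ k" for k
  proof (induction k)
    case 0 thus ?case using norm_e p0 by simp
  next
    case (Suc k)
    have "norm (p (Suc k)) \<le> norm v * norm (p k)" using normm[of "-v" "p k"] pS by simp
    also have "\<dots> \<le> norm v * norm v ^ k" using Suc by (simp add: mult_left_mono)
    finally show ?case by simp
  qed
  have nv1: "norm (norm v) < 1" using v by simp
  have sg: "summable (\<lambda>k. norm v ^ k)" using summable_geometric[OF nv1] .
  have sp: "summable p" by (rule summable_comparison_test'[OF sg pn])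
  have snp: "summable (\<lambda>k. norm (p k))" by (rule summable_comparison_test'[OF sg]) (use pn in simp)
  have spS: "summable (\<lambda>k. p (Suc k))" using sp summable_Suc_iff[of p] by simp
  define s where "s = suminf p"
  have mvp: "mul v (p k) = - p (Suc k)" for k using pS minus_l by simp
  have vs: "mul v s = e - s"
  proof -
    have "mul v s = (\<Sum>k. mul v (p k))" unfolding s_def by (rule bounded_linear.suminf[OF bl_r sp])
    also have "\<dots> = (\<Sum>k. - p (Suc k))" by (simp add: mvp)
    also have "\<dots> = - (\<Sum>k. p (Suc k))" by (rule suminf_minus[OF spS])
    also have "\<dots> = e - s" unfolding s_def suminf_split_head[OF sp] p0 by simp
    finally show ?thesis .
  qed
  have comm: "mul (p k) v = mul v (p k)" for k
  proof (induction k)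
    case 0 thus ?case by (simp add: p0 unit_l unit_r)
  next
    case (Suc k)
    have "mul (p (Suc k)) v = mul (-v) (mul (p k) v)" by (simp add: pS assoc)
    also have "\<dots> = mul (-v) (mul v (p k))" using Suc by simp
    also have "\<dots> = mul v (mul (-v) (p k))" by (simp add: minus_l minus_r assoc[symmetric])
    finally show ?case by (simp add: pS)
  qed
  have sv: "mul s v = mul v s"
  proof -
    have "mul s v = (\<Sum>k. mul (p k) v)" unfolding s_def by (rule bounded_linear.suminf[OF bl_l sp])
    also have "\<dots> = (\<Sum>k. mul v (p k))" by (simp add: comm)
    also have "\<dots> = mul v s" unfolding s_def by (rule bounded_linear.suminf[OF bl_r sp, symmetric])
    finally show ?thesis .
  qed
  have 1: "mul (e + v) s = e" by (simp add: add_l unit_l vs)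
  have 2: "mul s (e + v) = e" by (simp add: add_r unit_r sv vs)
  have "norm (s - e) = norm (\<Sum>k. p (Suc k))" by (simp add: s_def suminf_split_head[OF sp] p0)
  also have "\<dots> \<le> (\<Sum>k. norm (p (Suc k)))"
    by (rule summable_norm) (use summable_Suc_iff[of "\<lambda>k. norm (p k)"] snp in simp)
  also have "\<dots> \<le> (\<Sum>k. norm v * norm v ^ k)"
  proof (rule suminf_le)
    show "norm (p (Suc k)) \<le> norm v * norm v ^ k" for k using pn[of "Suc k"] by simp
    show "summable (\<lambda>k. norm (p (Suc k)))" using summable_Suc_iff[of "\<lambda>k. norm (p k)"] snp by simp
    show "summable (\<lambda>k. norm v * norm v ^ k)" by (rule summable_mult[OF sg])
  qed
  also have "\<dots> = norm v * (1 / (1 - norm v))" by (simp add: suminf_mult[OF sg] suminf_geometric[OF nv1])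
  also have "\<dots> \<le> 2 * norm v"
  proof -
    have "1 / (1 - norm v) \<le> 2" using v by (simp add: field_simps)
    from mult_left_mono[OF this norm_ge_zero[of v]] show ?thesis by (simp add: mult.commute)
  qed
  finally have "norm (s - e) \<le> 2 * norm v" .
  thus ?thesis using 1 2 by blast
qed


lemma NL:
  assumes aa: "mul a a' = e" "mul a' a = e" and small: "norm (b - a) * norm a' \<le> 1/2"
  shows "\<exists>b'. mul b b' = e \<and> mul b' b = e \<and> norm (b' - a') \<le> 2 * (norm a')^2 * norm (b - a)"
proof -
  define d where "d = b - a"
  define v where "v = mul a' d"
  have nv: "norm v \<le> norm a' * norm d" unfolding v_def by (rule normm)
  hence "norm v \<le> 1/2" using small unfolding d_def by (simp add: mult.commute)
  then obtain s where s: "mul (e+v) s = e" "mul s (e+v) = e" "norm (s - e) \<le> 2 * norm v"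
    using neumann by blast
  have bd: "b = a + d" unfolding d_def by simp
  have ab: "mul a' b = e + v" unfolding bd add_r v_def aa(2) ..
  have 1: "mul (mul s a') b = e" by (simp add: assoc ab s(2))
  have bb: "mul a (mul a' b) = b" by (simp add: assoc[symmetric] aa(1) unit_l)
  have "mul b (mul s a') = mul (mul a (mul a' b)) (mul s a')" using bb by simp
  also have "\<dots> = mul a (mul (mul (mul a' b) s) a')" by (simp add: assoc)
  also have "\<dots> = e" by (simp add: ab s(1) unit_l aa(1))
  finally have 2: "mul b (mul s a') = e" .
  have "norm (mul s a' - a') = norm (mul (s - e) a')" by (simp add: diff_l unit_l)
  also have "\<dots> \<le> norm (s - e) * norm a'" by (rule normm)
  also have "\<dots> \<le> (2 * (norm a' * norm d)) * norm a'"
    using s(3) nv by (intro mult_right_mono) auto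
  also have "\<dots> = 2 * (norm a')^2 * norm (b - a)" by (simp add: d_def power2_eq_square)
  finally show ?thesis using 1 2 by blast
qed


lemma approx_inv:
  assumes aa: "mul a a' = e" "mul a' a = e" and ep: "\<epsilon> > 0"
  shows "\<exists>\<rho>>0. \<forall>b. dist b a \<le> \<rho> \<longrightarrow> (\<exists>b'. mul b b' = e \<and> mul b' b = e \<and> dist b' a' \<le> \<epsilon>)"
proof -
  define \<rho> where "\<rho> = min (1 / (2 * (norm a' + 1))) (\<epsilon> / (2 * (norm a')^2 + 1))"
  have q1: "2 * (norm a')^2 + 1 > 0"
    by (metis add_pos_nonneg mult_nonneg_nonneg norm_ge_zero zero_le_power2 zero_less_one zero_le_numeral add.commute)
  have q2: "2 * (norm a' + 1) > 0" by (simp add: add_nonneg_pos)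
  note q = q1 q2
  have r0: "\<rho> > 0" unfolding \<rho>_def using ep q by simp
  have "\<exists>b'. mul b b' = e \<and> mul b' b = e \<and> dist b' a' \<le> \<epsilon>" if b: "dist b a \<le> \<rho>" for b
  proof -
    have nb: "norm (b - a) \<le> \<rho>" using b by (simp add: dist_norm)
    have "norm (b - a) * norm a' \<le> \<rho> * (norm a' + 1)"
      using nb r0 by (intro mult_mono) auto
    also have "\<dots> \<le> 1 / (2 * (norm a' + 1)) * (norm a' + 1)"
      unfolding \<rho>_def by (intro mult_right_mono) auto
    also have "\<dots> = 1/2" using q2 by (simp add: field_simps)
    finally obtain b' where b': "mul b b' = e" "mul b' b = e" "norm (b' - a') \<le> 2 * (norm a')^2 * norm (b - a)"
      using NL[OF aa] by blast
    have "2 * (norm a')^2 * norm (b - a) \<le> (2 * (norm a')^2 + 1) * \<rho>"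
      using nb r0 by (intro mult_mono) auto
    also have "\<dots> \<le> (2 * (norm a')^2 + 1) * (\<epsilon> / (2 * (norm a')^2 + 1))"
      unfolding \<rho>_def by (intro mult_left_mono) auto
    also have "\<dots> = \<epsilon>" using q1 by simp
    finally show ?thesis using b' by (auto simp: dist_norm)
  qed
  thus ?thesis using r0 by blast
qed

lemma mulbound: "dist (mul c a) (mul c b) \<le> norm c * dist a b" "dist (mul a c) (mul b c) \<le> dist a b * norm c"
  unfolding dist_norm diff_r[symmetric] diff_l[symmetric] by (rule normm)+


lemma part2_core:
  fixes T :: "nat \<Rightarrow> 'c set" and g :: "nat \<Rightarrow> real"
  assumes dens: "\<And>y \<epsilon> N. \<epsilon> > 0 \<Longrightarrow> \<exists>n\<ge>N. \<exists>h\<in>T n. dist y h < \<epsilon>"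
    and g: "\<forall>n. g n > 0"
    and xy: "mul x y = e" "mul y x = e"
  shows "\<exists>x1 y1 x2 y2. x = mul x1 x2 \<and> mul x1 y1 = e \<and> mul y1 x1 = e \<and>
           mul x2 y2 = e \<and> mul y2 x2 = e \<and>
           (\<forall>N. \<exists>n\<ge>N. \<exists>h\<in>T n. dist x1 h \<le> g n) \<and> (\<forall>N. \<exists>n\<ge>N. \<exists>h\<in>T n. dist y1 h \<le> g n) \<and>
           (\<forall>N. \<exists>n\<ge>N. \<exists>h\<in>T n. dist x2 h \<le> g n) \<and> (\<forall>N. \<exists>n\<ge>N. \<exists>h\<in>T n. dist y2 h \<le> g n)"
proof -
  define S where "S = {z. \<exists>w. mul z w = e \<and> mul w z = e}"
  define ii where "ii z = (SOME w. mul z w = e \<and> mul w z = e)" for z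
  have iiS: "mul z (ii z) = e \<and> mul (ii z) z = e" if "z \<in> S" for z
    using that unfolding S_def ii_def by (rule CollectE) (rule someI_ex)
  have ii_eq: "ii z = w" if "mul z w = e" "mul w z = e" for z w
  proof -
    have "z \<in> S" using that unfolding S_def by blast
    thus ?thesis using iiS[of z] that inv_unique by blast
  qed
  have inS: "z \<in> S" if "mul z w = e" "mul w z = e" for z w using that unfolding S_def by blast
  define nx where "nx = norm x + 1"
  define ny where "ny = norm y + 1"
  have nx: "nx > 0" "norm x \<le> nx" and ny: "ny > 0" "norm y \<le> ny"
    unfolding nx_def ny_def by (simp_all add: add_nonneg_pos)
  define f where "f i z = (if i = (0::nat) then z else if i = 1 then ii z else if i = 2 then mul (ii z) x else mul y z)" for i z
  have dsm: "dist (mul c a) (mul c b) \<le> \<epsilon>" if "dist a b \<le> \<epsilon> / (norm c + 1)" "\<epsilon> > 0" for a b c \<epsilon>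
  proof -
    have "dist (mul c a) (mul c b) \<le> norm c * dist a b" by (rule mulbound)
    also have "\<dots> \<le> (norm c + 1) * (\<epsilon> / (norm c + 1))" using that by (intro mult_mono) auto
    also have "\<dots> = \<epsilon>"
    proof -
      have nc: "norm c + 1 > 0" using norm_ge_zero[of c] by linarith
      thus ?thesis by simp
    qed
    finally show ?thesis .
  qed
  have dsm2: "dist (mul a c) (mul b c) \<le> \<epsilon>" if "dist a b \<le> \<epsilon> / (norm c + 1)" "\<epsilon> > 0" for a b c \<epsilon>
  proof -
    have "dist (mul a c) (mul b c) \<le> dist a b * norm c" by (rule mulbound)
    also have "\<dots> \<le> (\<epsilon> / (norm c + 1)) * (norm c + 1)" using that by (intro mult_mono) auto
    also have "\<dots> = \<epsilon>"
    proof -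
      have nc: "norm c + 1 > 0" using norm_ge_zero[of c] by linarith
      thus ?thesis by simp
    qed
    finally show ?thesis .
  qed
  have epos: "\<epsilon> / (norm c + 1) > 0" if "\<epsilon> > 0" for \<epsilon> and c :: 'c using that norm_ge_zero[of c] by (simp add: add_nonneg_pos)
  have "\<exists>z\<in>S. \<forall>i<4. \<forall>N. \<exists>n\<ge>N. \<exists>h\<in>T n. dist (f i z) h \<le> g n"
  proof (rule construction[where zst = e])
    show "e \<in> S" using inS[of e e] unit_l by simp
    show "\<forall>n. g n > 0" by (rule g)
  next
    fix i z \<epsilon> N assume i: "i < (4::nat)" and zS: "z \<in> S" and ep: "\<epsilon> > (0::real)"
    note zi = iiS[OF zS]
    show "\<exists>n\<ge>N. \<exists>z'\<in>S. dist z' z \<le> \<epsilon> \<and> f i z' \<in> T n"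
    proof -
      consider "i = 0" | "i = 1" | "i = 2" | "i = 3" using i by linarith
      thus ?thesis
      proof cases
        case 1
        obtain \<rho> where r: "\<rho> > 0" "\<forall>b. dist b z \<le> \<rho> \<longrightarrow> (\<exists>b'. mul b b' = e \<and> mul b' b = e \<and> dist b' (ii z) \<le> 1)"
          using approx_inv[of z "ii z" 1] zi by auto
        obtain n h where h: "n \<ge> N" "h \<in> T n" "dist z h < min \<rho> \<epsilon>" using dens[where y=z and \<epsilon>="min \<rho> \<epsilon>" and N=N] r ep by auto
        hence "h \<in> S" using r inS by (metis dist_commute less_imp_le min.strict_boundedE)
        thus ?thesis using h 1 by (intro exI[of _ n]) (auto simp: f_def dist_commute intro!: bexI[of _ h])
      next
        case 2
        obtain \<rho> where r: "\<rho> > 0" "\<forall>b. dist b (ii z) \<le> \<rho> \<longrightarrow> (\<exists>b'. mul b b' = e \<and> mul b' b = e \<and> dist b' z \<le> \<epsilon>)"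
          using approx_inv[of "ii z" z \<epsilon>] zi ep by auto
        obtain n h where h: "n \<ge> N" "h \<in> T n" "dist (ii z) h < \<rho>" using dens[where y="ii z" and \<epsilon>=\<rho> and N=N] r by auto
        then obtain h' where h': "mul h h' = e" "mul h' h = e" "dist h' z \<le> \<epsilon>"
          using r by (metis dist_commute less_imp_le)
        have "ii h' = h" using ii_eq h' by blast
        thus ?thesis using h h' 2 inS[of h' h] by (intro exI[of _ n]) (auto simp: f_def intro!: bexI[of _ h'])
      next
        case 3
        define w where "w = mul (ii z) x"
        define wi where "wi = mul y z"
        have ww: "mul w wi = e" "mul wi w = e" unfolding w_def wi_def
          by (simp_all add: assoc zi, simp_all add: assoc[symmetric] xy zi unit_l unit_r)
        obtain \<rho> where r: "\<rho> > 0" "\<forall>b. dist b w \<le> \<rho> \<longrightarrow> (\<exists>b'. mul b b' = e \<and> mul b' b = e \<and> dist b' wi \<le> \<epsilon> / (norm x + 1))"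
          using approx_inv[OF ww epos[OF ep, of x]] by auto
        obtain n h where h: "n \<ge> N" "h \<in> T n" "dist w h < \<rho>" using dens[where y=w and \<epsilon>=\<rho> and N=N] r by auto
        then obtain h' where h': "mul h h' = e" "mul h' h = e" "dist h' wi \<le> \<epsilon> / (norm x + 1)"
          using r by (metis dist_commute less_imp_le)
        define z' where "z' = mul x h'"
        have zz: "mul z' (mul h y) = e" "mul (mul h y) z' = e" unfolding z'_def
          by (simp_all add: assoc, simp_all add: assoc[symmetric] h' xy unit_l unit_r)
        have "ii z' = mul h y" using ii_eq zz by blast
        hence fz: "f i z' = h" using 3 by (simp add: f_def assoc xy unit_r)
        have "z = mul x wi" unfolding wi_def by (simp add: assoc[symmetric] xy unit_l)
        hence "dist z' z \<le> \<epsilon>" unfolding z'_def using dsm[OF h'(3) ep] by simp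
        thus ?thesis using h fz inS[OF zz] by (intro exI[of _ n]) auto
      next
        case 4
        define w where "w = mul y z"
        define wi where "wi = mul (ii z) x"
        have ww: "mul w wi = e" "mul wi w = e" unfolding w_def wi_def
          by (simp_all add: assoc zi, simp_all add: assoc[symmetric] xy zi unit_l unit_r)
        obtain \<rho> where r: "\<rho> > 0" "\<forall>b. dist b w \<le> \<rho> \<longrightarrow> (\<exists>b'. mul b b' = e \<and> mul b' b = e \<and> dist b' wi \<le> 1)"
          using approx_inv[OF ww, of 1] by auto
        obtain n h where h: "n \<ge> N" "h \<in> T n" "dist w h < min \<rho> (\<epsilon> / (norm x + 1))"
          using dens[where y=w and \<epsilon>="min \<rho> (\<epsilon> / (norm x + 1))" and N=N] r epos[OF ep, of x] by auto
        then obtain h' where h': "mul h h' = e" "mul h' h = e"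
          using r by (metis dist_commute less_imp_le min.strict_boundedE)
        define z' where "z' = mul x h"
        have zz: "mul z' (mul h' y) = e" "mul (mul h' y) z' = e" unfolding z'_def
          by (simp_all add: assoc, simp_all add: assoc[symmetric] h' xy unit_l unit_r)
        have fz: "f i z' = h" using 4 by (simp add: f_def z'_def assoc[symmetric] xy unit_l)
        have "z = mul x w" unfolding w_def by (simp add: assoc[symmetric] xy unit_l)
        moreover have "dist h w \<le> \<epsilon> / (norm x + 1)" using h(3) by (simp add: dist_commute)
        ultimately have "dist z' z \<le> \<epsilon>" unfolding z'_def using dsm ep by simp
        thus ?thesis using h fz inS[OF zz] by (intro exI[of _ n]) auto
      qed
    qed
  next
    fix i z \<epsilon> assume i: "i < (4::nat)" and zS: "z \<in> S" and ep: "\<epsilon> > (0::real)"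
    note zi = iiS[OF zS]
    show "\<exists>\<delta>>0. \<forall>w. dist w z \<le> \<delta> \<longrightarrow> w \<in> S \<and> dist (f i w) (f i z) \<le> \<epsilon>"
    proof -
      consider "i = 0" | "i = 1" | "i = 2" | "i = 3" using i by linarith
      thus ?thesis
      proof cases
        case 1
        obtain \<rho> where r: "\<rho> > 0" "\<forall>b. dist b z \<le> \<rho> \<longrightarrow> (\<exists>b'. mul b b' = e \<and> mul b' b = e \<and> dist b' (ii z) \<le> 1)"
          using approx_inv[of z "ii z" 1] zi by auto
        show ?thesis using r ep 1 inS by (intro exI[of _ "min \<rho> \<epsilon>"]) (auto simp: f_def)
      next
        case 2
        obtain \<rho> where r: "\<rho> > 0" "\<forall>b. dist b z \<le> \<rho> \<longrightarrow> (\<exists>b'. mul b b' = e \<and> mul b' b = e \<and> dist b' (ii z) \<le> \<epsilon>)"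
          using approx_inv[of z "ii z" \<epsilon>] zi ep by auto
        have "w \<in> S \<and> dist (f i w) (f i z) \<le> \<epsilon>" if dw: "dist w z \<le> \<rho>" for w
        proof -
          obtain w' where w': "mul w w' = e" "mul w' w = e" "dist w' (ii z) \<le> \<epsilon>" using r dw by blast
          have "ii w = w'" using ii_eq w' by blast
          thus ?thesis using w' inS 2 by (auto simp: f_def)
        qed
        thus ?thesis using r by blast
      next
        case 3
        obtain \<rho> where r: "\<rho> > 0" "\<forall>b. dist b z \<le> \<rho> \<longrightarrow> (\<exists>b'. mul b b' = e \<and> mul b' b = e \<and> dist b' (ii z) \<le> \<epsilon> / (norm x + 1))"
          using approx_inv[OF zi[THEN conjunct1] zi[THEN conjunct2] epos[OF ep, of x]] by auto
        have "w \<in> S \<and> dist (f i w) (f i z) \<le> \<epsilon>" if dw: "dist w z \<le> \<rho>" for w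
        proof -
          obtain w' where w': "mul w w' = e" "mul w' w = e" "dist w' (ii z) \<le> \<epsilon> / (norm x + 1)" using r dw by blast
          have "ii w = w'" using ii_eq w' by blast
          thus ?thesis using w' inS 3 dsm2[OF w'(3) ep] by (auto simp: f_def)
        qed
        thus ?thesis using r by blast
      next
        case 4
        obtain \<rho> where r: "\<rho> > 0" "\<forall>b. dist b z \<le> \<rho> \<longrightarrow> (\<exists>b'. mul b b' = e \<and> mul b' b = e \<and> dist b' (ii z) \<le> 1)"
          using approx_inv[of z "ii z" 1] zi by auto
        have "w \<in> S \<and> dist (f i w) (f i z) \<le> \<epsilon>" if dw: "dist w z \<le> min \<rho> (\<epsilon> / (norm y + 1))" for w
        proof -
          obtain w' where w': "mul w w' = e" "mul w' w = e" using r dw by auto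
          have "dist (mul y w) (mul y z) \<le> \<epsilon>" using dsm dw ep by simp
          thus ?thesis using w' inS 4 by (auto simp: f_def)
        qed
        thus ?thesis using r epos[OF ep, of y] by (intro exI[of _ "min \<rho> (\<epsilon> / (norm y + 1))"]) auto
      qed
    qed
  qed simp
  then obtain L where L: "L \<in> S" "\<forall>i<4. \<forall>N. \<exists>n\<ge>N. \<exists>h\<in>T n. dist (f i L) h \<le> g n" by blast
  note Li = iiS[OF L(1)]
  have A: "x = mul L (mul (ii L) x)" by (simp add: assoc[symmetric] Li unit_l)
  have B: "mul (mul (ii L) x) (mul y L) = e" "mul (mul y L) (mul (ii L) x) = e"
    by (simp_all add: assoc, simp_all add: assoc[symmetric] xy Li unit_l unit_r)
  show ?thesis
    apply (rule exI[of _ L], rule exI[of _ "ii L"], rule exI[of _ "mul (ii L) x"], rule exI[of _ "mul y L"])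
    using A B Li L(2)[rule_format, of 0] L(2)[rule_format, of 1] L(2)[rule_format, of 2] L(2)[rule_format, of 3]
    by (simp add: f_def)
qed

end


lemma balg_from:
  fixes t :: "'a::banach \<Rightarrow> 'b::banach \<Rightarrow> 'c::banach"
  assumes RC: "reasonable_crossnorm_completion scA scB scX t"
    and UA: "F_unital_banach_algebra scA mulA oneA" and UB: "F_unital_banach_algebra scB mulB oneB"
    and BX: "F_banach_algebra scX mulX"
    and MT: "\<forall>a1 b1 a2 b2. mulX (t a1 b1) (t a2 b2) = t (mulA a1 a2) (mulB b1 b2)"
  shows "balg mulX (t oneA oneB)"
proof -
  have FS: "\<And>r x. scX (of_real r) x = r *\<^sub>R x" using BX unfolding F_banach_algebra_def F_space_def by blast
  have as: "\<And>x y z. mulX (mulX x y) z = mulX x (mulX y z)" using BX unfolding F_banach_algebra_def by blast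
  have ll: "\<And>y. F_linear scX scX (\<lambda>x. mulX x y)" and lr: "\<And>x. F_linear scX scX (mulX x)"
    using BX unfolding F_banach_algebra_def by blast+
  have nm: "\<And>x y. norm (mulX x y) \<le> norm x * norm y" using BX unfolding F_banach_algebra_def by blast
  have bl_l: "bounded_linear (\<lambda>x. mulX x y)" for y
  proof (rule bounded_linear_intro[where K = "norm y"])
    show "mulX (a + b) y = mulX a y + mulX b y" for a b using ll[of y] unfolding F_linear_def by blast
    show "mulX (r *\<^sub>R a) y = r *\<^sub>R mulX a y" for r a
      using ll[of y] FS unfolding F_linear_def by metis
    show "norm (mulX a y) \<le> norm a * norm y" for a by (rule nm)
  qed
  have bl_r: "bounded_linear (mulX x)" for x
  proof (rule bounded_linear_intro[where K = "norm x"])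
    show "mulX x (a + b) = mulX x a + mulX x b" for a b using lr[of x] unfolding F_linear_def by blast
    show "mulX x (r *\<^sub>R a) = r *\<^sub>R mulX x a" for r a
      using lr[of x] FS unfolding F_linear_def by metis
    show "norm (mulX x a) \<le> norm a * norm x" for a using nm[of x a] by (simp add: mult.commute)
  qed
  define e where "e = t oneA oneB"
  have uA: "\<And>a. mulA oneA a = a \<and> mulA a oneA = a" and nA: "norm oneA = 1"
    using UA unfolding F_unital_banach_algebra_def by blast+
  have uB: "\<And>b. mulB oneB b = b \<and> mulB b oneB = b" and nB: "norm oneB = 1"
    using UB unfolding F_unital_banach_algebra_def by blast+
  define D where "D = {(\<Sum>i<n. t (a i) (b i)) | (n::nat) a b. True}"
  have cD: "closure D = UNIV" using RC unfolding reasonable_crossnorm_completion_def D_def by blast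
  have sum_l: "mulX e (\<Sum>i<n. t (a i) (b i)) = (\<Sum>i<n. t (a i) (b i))" for n :: nat and a b
  proof (induction n)
    case 0 thus ?case using linear_0[OF bounded_linear.linear[OF bl_r[of e]]] by simp
  next
    case (Suc n) thus ?case
      using linear_add[OF bounded_linear.linear[OF bl_r[of e]]] MT uA uB unfolding e_def by simp
  qed
  have sum_r: "mulX (\<Sum>i<n. t (a i) (b i)) e = (\<Sum>i<n. t (a i) (b i))" for n :: nat and a b
  proof (induction n)
    case 0 thus ?case using linear_0[OF bounded_linear.linear[OF bl_l[of e]]] by simp
  next
    case (Suc n) thus ?case
      using linear_add[OF bounded_linear.linear[OF bl_l[of e]]] MT uA uB unfolding e_def by simp
  qed
  have cl: "closed {x. mulX e x = x}" "closed {x. mulX x e = x}"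
    by (rule closed_Collect_eq, rule bounded_linear.continuous_on[OF bl_r continuous_on_id], rule continuous_on_id)
       (rule closed_Collect_eq, rule bounded_linear.continuous_on[OF bl_l continuous_on_id], rule continuous_on_id)
  have "D \<subseteq> {x. mulX e x = x}" "D \<subseteq> {x. mulX x e = x}" unfolding D_def using sum_l sum_r by auto
  hence "closure D \<subseteq> {x. mulX e x = x}" "closure D \<subseteq> {x. mulX x e = x}"
    using closure_minimal cl by blast+
  hence un: "mulX e x = x" "mulX x e = x" for x using cD by auto
  have "norm e \<le> norm oneA * norm oneB" unfolding e_def using RC unfolding reasonable_crossnorm_completion_def by blast
  hence ne: "norm e \<le> 1" using nA nB by simp
  show ?thesis unfolding e_def[symmetric]
    unfolding balg_def using as bl_l bl_r nm un ne by blast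
qed

theorem theorem2p12:
  fixes scA :: "'k::real_normed_field \<Rightarrow> 'a::banach \<Rightarrow> 'a"
    and scB :: "'k \<Rightarrow> 'b::banach \<Rightarrow> 'b"
    and scX :: "'k \<Rightarrow> 'c::banach \<Rightarrow> 'c"
    and V :: "nat \<Rightarrow> 'a set"
    and t :: "'a \<Rightarrow> 'b \<Rightarrow> 'c"
    and \<phi> :: "nat \<Rightarrow> real"
  assumes "scalars_R_or_C TYPE('k)"
    and "approx_scheme scA V"
    and "reasonable_crossnorm_completion scA scB scX t"
    and "scale_function \<phi>"
  shows "(\<forall>x. \<exists>x1 x2. x = x1 + x2 \<and> x1 \<in> BB t V \<phi> \<and> x2 \<in> BB t V \<phi>) \<and>
    (\<forall>mulA oneA mulB oneB mulX.
       F_unital_banach_algebra scA mulA oneA \<and> F_unital_banach_algebra scB mulB oneB \<and>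
       F_banach_algebra scX mulX \<and>
       (\<forall>a1 b1 a2 b2. mulX (t a1 b1) (t a2 b2) = t (mulA a1 a2) (mulB b1 b2)) \<longrightarrow>
       (\<forall>x y. mulX x y = t oneA oneB \<and> mulX y x = t oneA oneB \<longrightarrow>
          (\<exists>x1 y1 x2 y2. x = mulX x1 x2 \<and>
             mulX x1 y1 = t oneA oneB \<and> mulX y1 x1 = t oneA oneB \<and>
             mulX x2 y2 = t oneA oneB \<and> mulX y2 x2 = t oneA oneB \<and>
             x1 \<in> BB t V \<phi> \<and> y1 \<in> BB t V \<phi> \<and> x2 \<in> BB t V \<phi> \<and> y2 \<in> BB t V \<phi>)))"
  proof -
  have pos: "\<forall>n. 0 < \<phi> n" using assms(4) unfolding scale_function_def by blast
  have P1: "\<forall>x. \<exists>x1 x2. x = x1 + x2 \<and> x1 \<in> BB t V \<phi> \<and> x2 \<in> BB t V \<phi>"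
    using part1'[OF assms(2,3,4)] by blast
  have P2: "\<forall>mulA oneA mulB oneB mulX.
       F_unital_banach_algebra scA mulA oneA \<and> F_unital_banach_algebra scB mulB oneB \<and>
       F_banach_algebra scX mulX \<and>
       (\<forall>a1 b1 a2 b2. mulX (t a1 b1) (t a2 b2) = t (mulA a1 a2) (mulB b1 b2)) \<longrightarrow>
       (\<forall>x y. mulX x y = t oneA oneB \<and> mulX y x = t oneA oneB \<longrightarrow>
          (\<exists>x1 y1 x2 y2. x = mulX x1 x2 \<and>
             mulX x1 y1 = t oneA oneB \<and> mulX y1 x1 = t oneA oneB \<and>
             mulX x2 y2 = t oneA oneB \<and> mulX y2 x2 = t oneA oneB \<and>
             x1 \<in> BB t V \<phi> \<and> y1 \<in> BB t V \<phi> \<and> x2 \<in> BB t V \<phi> \<and> y2 \<in> BB t V \<phi>))"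
  proof (intro allI impI)
    fix mulA oneA mulB oneB mulX x y
    assume H: "F_unital_banach_algebra scA mulA oneA \<and> F_unital_banach_algebra scB mulB oneB \<and>
       F_banach_algebra scX mulX \<and>
       (\<forall>a1 b1 a2 b2. mulX (t a1 b1) (t a2 b2) = t (mulA a1 a2) (mulB b1 b2))"
      and xy: "mulX x y = t oneA oneB \<and> mulX y x = t oneA oneB"
    have BA: "balg mulX (t oneA oneB)" using balg_from[OF assms(3)] H by blast
    have dens: "\<And>y \<epsilon> N. \<epsilon> > 0 \<Longrightarrow> \<exists>n\<ge>N. \<exists>h\<in>tensor_sub t V n. dist y h < \<epsilon>"
      using density[OF assms(2,3)] by blast
    have g: "\<forall>n. (1/2::real) powr (1/\<phi> n) > 0" by simp
    obtain x1 y1 x2 y2 where R: "x = mulX x1 x2" "mulX x1 y1 = t oneA oneB" "mulX y1 x1 = t oneA oneB"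
      "mulX x2 y2 = t oneA oneB" "mulX y2 x2 = t oneA oneB"
      "\<forall>N. \<exists>n\<ge>N. \<exists>h\<in>tensor_sub t V n. dist x1 h \<le> (1/2) powr (1/\<phi> n)"
      "\<forall>N. \<exists>n\<ge>N. \<exists>h\<in>tensor_sub t V n. dist y1 h \<le> (1/2) powr (1/\<phi> n)"
      "\<forall>N. \<exists>n\<ge>N. \<exists>h\<in>tensor_sub t V n. dist x2 h \<le> (1/2) powr (1/\<phi> n)"
      "\<forall>N. \<exists>n\<ge>N. \<exists>h\<in>tensor_sub t V n. dist y2 h \<le> (1/2) powr (1/\<phi> n)"
      using balg.part2_core[OF BA dens g, of x y] xy by blast
    show "\<exists>x1 y1 x2 y2. x = mulX x1 x2 \<and>
             mulX x1 y1 = t oneA oneB \<and> mulX y1 x1 = t oneA oneB \<and>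
             mulX x2 y2 = t oneA oneB \<and> mulX y2 x2 = t oneA oneB \<and>
             x1 \<in> BB t V \<phi> \<and> y1 \<in> BB t V \<phi> \<and> x2 \<in> BB t V \<phi> \<and> y2 \<in> BB t V \<phi>"
      using R BB_crit[OF pos R(6)] BB_crit[OF pos R(7)] BB_crit[OF pos R(8)] BB_crit[OF pos R(9)] by blast
  qed
  show ?thesis using P1 P2 by blast
qed

end
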